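(* Let $N$ be a power of $4$ and let $S_N$ be the STOne matrix: $S_4=\frac12\begin{pmatrix}-1&1&1&1\\ 1&-1&1&1\\ 1&1&-1&1\\ 1&1&1&-1\end{pmatrix}$ and $S_{4^{k+1}}=S_4\otimes S_{4^k}$ for $k\ge1$ (Kronecker product). Let $v\in\mathbb{R}^N$, let $\mu=\mathrm{Mean}(v)\,1_N$, and define $e=S_Nv-\mu$, so that the $i$-th entry of $S_Nv$ equals $\mu_i+e(i)$. Then $\mathrm{Mean}(e)=0$ and $\mathrm{Var}(e)=\mathrm{Var}(v)$.
   Context: For $x\in\mathbb{R}^N$, $\mathrm{Mean}(x)=\frac1N\sum_{i=1}^N x_i$ and $\mathrm{Var}(x)=\frac1N\sum_{i=1}^N (x_i-\mathrm{Mean}(x))^2$. $1_N$ is the all-ones vector in $\mathbb{R}^N$. *)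

theory Defs
  imports Complex_Main
begin

text \<open>Vectors in R^N are functions nat => real (only indices i < N matter);
  N x N matrices are functions nat => nat => real (only indices < N matter).\<close>

definition vmean :: "nat \<Rightarrow> (nat \<Rightarrow> real) \<Rightarrow> real" where
  "vmean N x = (\<Sum>i<N. x i) / real N"

definition vvar :: "nat \<Rightarrow> (nat \<Rightarrow> real) \<Rightarrow> real" where
  "vvar N x = (\<Sum>i<N. (x i - vmean N x)^2) / real N"

definition mat_vec :: "nat \<Rightarrow> (nat \<Rightarrow> nat \<Rightarrow> real) \<Rightarrow> (nat \<Rightarrow> real) \<Rightarrow> nat \<Rightarrow> real" where
  "mat_vec N A v = (\<lambda>i. \<Sum>j<N. A i j * v j)"

definition kron :: "(nat \<Rightarrow> nat \<Rightarrow> real) \<Rightarrow> nat \<Rightarrow> (nat \<Rightarrow> nat \<Rightarrow> real) \<Rightarrow> nat \<Rightarrow> nat \<Rightarrow> real" where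
  "kron A m B = (\<lambda>i j. A (i div m) (j div m) * B (i mod m) (j mod m))"

definition S4 :: "nat \<Rightarrow> nat \<Rightarrow> real" where
  "S4 = (\<lambda>i j. if i = j then - 1/2 else 1/2)"

text \<open>stone k is the STOne matrix S_{4^k} (for k \<ge> 1).\<close>
fun stone :: "nat \<Rightarrow> nat \<Rightarrow> nat \<Rightarrow> real" where
  "stone 0 = (\<lambda>i j. 0)"
| "stone (Suc 0) = S4"
| "stone (Suc (Suc k)) = kron S4 (4 ^ Suc k) (stone (Suc k))"

end

theory Submission
  imports Defs
begin

lemma sum_lt_add: fixes a M :: nat shows "(\<Sum>i<a+M. (f i::real)) = (\<Sum>i<a. f i) + (\<Sum>b<M. f (a+b))"
  by (induction M) (simp_all add: add_Suc_right)

lemma sum_split_mul: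
  "(\<Sum>i<n*M. (f i::real)) = (\<Sum>a<n. \<Sum>b<M. f (a*M+b :: nat))"
proof (induction n)
  case 0 then show ?case by simp
next
  case (Suc n)
  have "(\<Sum>i<Suc n*M. f i) = (\<Sum>i<n*M + M. f i)" by (simp add: add.commute)
  also have "\<dots> = (\<Sum>i<n*M. f i) + (\<Sum>b<M. f (n*M+b))"
    by (rule sum_lt_add)
  finally show ?case using Suc by simp
qed

lemma four_sum: "(\<Sum>a<4::nat. g a) = g 0 + g 1 + g 2 + (g 3 :: real)"
  by (simp add: eval_nat_numeral)

lemma S4_col: "j < 4 \<Longrightarrow> (\<Sum>a<4. S4 a j) = 1"
  unfolding four_sum S4_def
  by (auto simp: less_Suc_eq eval_nat_numeral)

lemma S4_orth: "j < 4 \<Longrightarrow> l < 4 \<Longrightarrow> (\<Sum>a<4. S4 a j * S4 a l) = (if j = l then 1 else 0)"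
  unfolding four_sum S4_def
  by (auto simp: less_Suc_eq eval_nat_numeral)

lemma stone_props:
  assumes "k \<ge> 1"
  shows "(\<forall>j<4^k. (\<Sum>i<4^k. stone k i j) = 1) \<and>
         (\<forall>j<4^k. \<forall>l<4^k. (\<Sum>i<4^k. stone k i j * stone k i l) = (if j = l then 1 else 0))"
  using assms
proof (induction k rule: nat_induct_at_least)
  case base
  then show ?case using S4_col S4_orth by simp
next
  case (Suc k)
  define M :: nat where "M = 4^k"
  have M0: "M > 0" unfolding M_def by simp
  have st: "stone (Suc k) = kron S4 M (stone k)"
    using Suc(1) unfolding M_def by (cases k) auto
  have N: "(4::nat)^Suc k = 4 * M" unfolding M_def by simp
  have dm: "(a*M+b) div M = a" "(a*M+b) mod M = b" if "b < M" for a b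
    using that M0 by auto
  have IH1: "\<And>j. j < M \<Longrightarrow> (\<Sum>i<M. stone k i j) = 1"
    and IH2: "\<And>j l. j < M \<Longrightarrow> l < M \<Longrightarrow> (\<Sum>i<M. stone k i j * stone k i l) = (if j = l then 1 else 0)"
    using Suc(2) unfolding M_def by auto
  have jb: "j div M < 4" "j mod M < M" if "j < 4*M" for j
    using that M0 by (auto simp: less_mult_imp_div_less)
  show ?case
  proof (intro conjI allI impI)
    fix j :: nat assume j: "j < 4^Suc k"
    hence j': "j < 4*M" using N by simp
    have "(\<Sum>i<4^Suc k. stone (Suc k) i j)
        = (\<Sum>a<4. \<Sum>b<M. S4 a (j div M) * stone k b (j mod M))"
      unfolding N st kron_def sum_split_mul
      by (intro sum.cong refl) (simp add: dm)
    also have "\<dots> = (\<Sum>a<4. S4 a (j div M)) * (\<Sum>b<M. stone k b (j mod M))"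
      by (simp add: sum_product)
    also have "\<dots> = 1" using S4_col IH1 jb[OF j'] by simp
    finally show "(\<Sum>i<4^Suc k. stone (Suc k) i j) = 1" .
  next
    fix j l :: nat assume j: "j < 4^Suc k" and l: "l < 4^Suc k"
    hence j': "j < 4*M" and l': "l < 4*M" using N by simp_all
    have "(\<Sum>i<4^Suc k. stone (Suc k) i j * stone (Suc k) i l)
        = (\<Sum>a<4. \<Sum>b<M. (S4 a (j div M) * S4 a (l div M)) * (stone k b (j mod M) * stone k b (l mod M)))"
      unfolding N st kron_def sum_split_mul
      by (intro sum.cong refl) (simp add: dm mult_ac)
    also have "\<dots> = (\<Sum>a<4. S4 a (j div M) * S4 a (l div M)) * (\<Sum>b<M. stone k b (j mod M) * stone k b (l mod M))"
      by (simp add: sum_product)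
    also have "\<dots> = (if j div M = l div M then 1 else 0) * (if j mod M = l mod M then 1 else 0)"
      using S4_orth IH2 jb[OF j'] jb[OF l'] by simp
    also have "\<dots> = (if j = l then 1 else 0)"
    proof -
      have "j = l \<longleftrightarrow> j div M = l div M \<and> j mod M = l mod M" by (metis div_mult_mod_eq)
      then show ?thesis by simp
    qed
    finally show "(\<Sum>i<4^Suc k. stone (Suc k) i j * stone (Suc k) i l) = (if j = l then 1 else 0)" .
  qed
qed

theorem lemma1:
  fixes k N :: nat and v :: "nat \<Rightarrow> real"
  assumes "k \<ge> 1" and "N = 4 ^ k"
  defines "e \<equiv> (\<lambda>i. mat_vec N (stone k) v i - vmean N v)"
  shows "vmean N e = 0 \<and> vvar N e = vvar N v"
proof -
  define S where "S = stone k"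
  define w where "w = mat_vec N S v"
  define m where "m = vmean N v"
  have P1: "\<And>j. j < N \<Longrightarrow> (\<Sum>i<N. S i j) = 1"
   and P2: "\<And>j l. j < N \<Longrightarrow> l < N \<Longrightarrow> (\<Sum>i<N. S i j * S i l) = (if j = l then 1 else 0)"
    using stone_props[OF assms(1)] assms(2) unfolding S_def by auto
  have Npos: "real N > 0" using assms(2) by simp
  have sw: "(\<Sum>i<N. w i) = (\<Sum>j<N. v j)"
  proof -
    have "(\<Sum>i<N. w i) = (\<Sum>i<N. \<Sum>j<N. S i j * v j)"
      unfolding w_def mat_vec_def by simp
    also have "\<dots> = (\<Sum>j<N. \<Sum>i<N. S i j * v j)" by (rule sum.swap)
    also have "\<dots> = (\<Sum>j<N. (\<Sum>i<N. S i j) * v j)" by (simp add: sum_distrib_right)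
    also have "\<dots> = (\<Sum>j<N. v j)" using P1 by simp
    finally show ?thesis .
  qed
  have sq: "(\<Sum>i<N. (w i)^2) = (\<Sum>j<N. (v j)^2)"
  proof -
    have "(\<Sum>i<N. (w i)^2) = (\<Sum>i<N. \<Sum>j<N. \<Sum>l<N. S i j * S i l * v j * v l)"
      unfolding w_def mat_vec_def power2_eq_square sum_product by (simp add: mult_ac)
    also have "\<dots> = (\<Sum>j<N. \<Sum>i<N. \<Sum>l<N. S i j * S i l * v j * v l)" by (rule sum.swap)
    also have "\<dots> = (\<Sum>j<N. \<Sum>l<N. \<Sum>i<N. S i j * S i l * v j * v l)"
      by (rule sum.cong[OF refl], rule sum.swap)
    also have "\<dots> = (\<Sum>j<N. \<Sum>l<N. (\<Sum>i<N. S i j * S i l) * v j * v l)"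
      by (simp add: sum_distrib_right)
    also have "\<dots> = (\<Sum>j<N. \<Sum>l<N. (if j = l then v j * v l else 0))"
      using P2 by (intro sum.cong refl) simp
    also have "\<dots> = (\<Sum>j<N. (v j)^2)" by (simp add: power2_eq_square)
    finally show ?thesis .
  qed
  have e: "e = (\<lambda>i. w i - m)" unfolding e_def w_def m_def S_def ..
  have se: "(\<Sum>i<N. e i) = 0"
    unfolding e using sw Npos by (simp add: sum_subtractf m_def vmean_def)
  have me: "vmean N e = 0" using se by (simp add: vmean_def)
  have var_gen: "vvar N x = ((\<Sum>i<N. (x i)^2) - 2 * vmean N x * (\<Sum>i<N. x i) + real N * (vmean N x)^2) / real N" for x
    unfolding vvar_def by (simp add: power2_diff sum_subtractf sum.distrib sum_distrib_left mult_ac)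
  have "vvar N e = ((\<Sum>i<N. (w i - m)^2)) / real N"
    using var_gen[of e] me se by (simp add: e)
  also have "\<dots> = ((\<Sum>i<N. (w i)^2) - 2 * m * (\<Sum>i<N. w i) + real N * m^2) / real N"
    by (simp add: power2_diff sum_subtractf sum.distrib sum_distrib_left mult_ac)
  also have "\<dots> = vvar N v"
    using var_gen[of v] sq sw by (simp add: m_def)
  finally show ?thesis using me by simp
qed

end
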